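(* Let $\kappa>0$ (possibly depending on $\beta$) with $\tilde\kappa=\kappa\beta>\frac1\pi$, and let $\varphi_\beta$ be a minimizer of $F_{\beta,\kappa}$ in $\mathcal J$. Then, for $\beta>0$ small enough, $\varphi_\beta(1)\ge\pi$.
   Context: For parameters $\beta>0$ and $\kappa>0$ define, for $\varphi\in H^1((0,1))$, $$F_{\beta,\kappa}(\varphi)=\frac18\int_0^1\left(\varphi'(x)^2+\frac{1}{\beta^2}\sin^2\varphi(x)\right)dx-\frac{\kappa}{2}\int_0^1\varphi'(x)\,dx,$$ and $\mathcal J=\{\varphi\in H^1((0,1)):\varphi(0)=0\}$. *)

theory Defs
  imports "HOL-Analysis.Analysis"
begin

definition is_weak_deriv :: "(real \<Rightarrow> real) \<Rightarrow> (real \<Rightarrow> real) \<Rightarrow> bool" where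
  "is_weak_deriv \<phi> g \<longleftrightarrow>
     set_integrable lborel {0..1} g \<and>
     set_integrable lborel {0..1} (\<lambda>x. (g x)\<^sup>2) \<and>
     (\<forall>x\<in>{0..1}. \<phi> x = \<phi> 0 + (LBINT t:{0..x}. g t))"

text \<open>H^1((0,1)), identified with its continuous representatives on [0,1].\<close>
definition H1 :: "(real \<Rightarrow> real) set" where
  "H1 = {\<phi>. \<exists>g. is_weak_deriv \<phi> g}"

definition wderiv :: "(real \<Rightarrow> real) \<Rightarrow> real \<Rightarrow> real" where
  "wderiv \<phi> = (SOME g. is_weak_deriv \<phi> g)"

definition F :: "real \<Rightarrow> real \<Rightarrow> (real \<Rightarrow> real) \<Rightarrow> real" where
  "F \<beta> \<kappa> \<phi> =
     1/8 * (LBINT x:{0..1}. (wderiv \<phi> x)\<^sup>2 + (1/\<beta>\<^sup>2) * (sin (\<phi> x))\<^sup>2)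
     - \<kappa>/2 * (LBINT x:{0..1}. wderiv \<phi> x)"

definition J :: "(real \<Rightarrow> real) set" where
  "J = {\<phi>. \<phi> \<in> H1 \<and> \<phi> 0 = 0}"

definition is_minimizer :: "real \<Rightarrow> real \<Rightarrow> (real \<Rightarrow> real) \<Rightarrow> bool" where
  "is_minimizer \<beta> \<kappa> \<phi> \<longleftrightarrow> \<phi> \<in> J \<and> (\<forall>\<psi>\<in>J. F \<beta> \<kappa> \<phi> \<le> F \<beta> \<kappa> \<psi>)"

end

theory Submission
  imports Defs
begin

lemma ind_ioi_icc:
  fixes a :: real
  shows "indicator {a<..} x * indicator {0..1} x =
     (if a < 0 then indicator {0..1} x else indicator {0..1} x - indicator {0..min a 1} x :: real)"
  by (auto simp: indicator_def)

lemma wd_unique: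
  assumes g1: "is_weak_deriv \<phi> g1" and g2: "is_weak_deriv \<phi> g2"
  shows "AE x in lborel. x \<in> {0..1} \<longrightarrow> g1 x = g2 x"
proof -
  define H where "H x = indicator {0..1::real} x * (g1 x - g2 x)" for x
  have i1: "set_integrable lborel {0..1} g1" and i2: "set_integrable lborel {0..1} g2"
    using g1 g2 unfolding is_weak_deriv_def by blast+
  have e1: "\<forall>x\<in>{0..1}. \<phi> x = \<phi> 0 + (LBINT t:{0..x}. g1 t)" using g1 unfolding is_weak_deriv_def by blast
  have e2: "\<forall>x\<in>{0..1}. \<phi> x = \<phi> 0 + (LBINT t:{0..x}. g2 t)" using g2 unfolding is_weak_deriv_def by blast
  have intH: "integrable lborel H"
    using set_integral_diff(1)[OF i1 i2] unfolding H_def set_integrable_def by simp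
  have Hm[measurable]: "H \<in> borel_measurable lborel" using intH by auto
  have zero: "(LBINT t:{0..x}. (g1 t - g2 t)) = 0" if "x \<in> {0..1}" for x
  proof -
    have "set_integrable lborel {0..x} g1" "set_integrable lborel {0..x} g2"
      using that by (auto intro!: set_integrable_subset[OF i1] set_integrable_subset[OF i2])
    hence "(LBINT t:{0..x}. (g1 t - g2 t)) = (LBINT t:{0..x}. g1 t) - (LBINT t:{0..x}. g2 t)"
      by (rule set_integral_diff(2))
    also have "\<dots> = 0"
    proof -
      have "\<phi> x = \<phi> 0 + (LBINT t:{0..x}. g1 t)" "\<phi> x = \<phi> 0 + (LBINT t:{0..x}. g2 t)"
        using e1 e2 that by blast+
      then show ?thesis by linarith
    qed
    finally show ?thesis .
  qed
  have intA: "(LINT x|lborel. indicator {a<..} x * H x) = 0" for a :: real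
  proof (cases "a < 0")
    case True
    have "(LINT x|lborel. indicator {a<..} x * H x) = (LBINT t:{0..1}. (g1 t - g2 t))"
      unfolding set_lebesgue_integral_def H_def
      by (intro Bochner_Integration.integral_cong) (use True in \<open>auto simp: indicator_def\<close>)
    then show ?thesis using zero[of 1] by simp
  next
    case False
    have "(LINT x|lborel. indicator {a<..} x * H x) =
      (LINT x|lborel. indicator {0..1} x * (g1 x - g2 x) - indicator {0..min a 1} x * (g1 x - g2 x))"
      unfolding H_def
      by (intro Bochner_Integration.integral_cong) (use False in \<open>auto simp: indicator_def\<close>)
    also have "\<dots> = (LINT x|lborel. indicator {0..1} x * (g1 x - g2 x)) - (LINT x|lborel. indicator {0..min a 1} x * (g1 x - g2 x))"
    proof (rule Bochner_Integration.integral_diff)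
      show "integrable lborel (\<lambda>x. indicat_real {0..1} x * (g1 x - g2 x))"
        using intH unfolding H_def .
      have "set_integrable lborel {0..min a 1} (\<lambda>x. g1 x - g2 x)"
        by (rule set_integrable_subset[OF set_integral_diff(1)[OF i1 i2]]) auto
      then show "integrable lborel (\<lambda>x. indicat_real {0..min a 1} x * (g1 x - g2 x))"
        unfolding set_integrable_def by simp
    qed
    also have "\<dots> = (LBINT t:{0..1}. (g1 t - g2 t)) - (LBINT t:{0..min a 1}. (g1 t - g2 t))"
      by (simp add: set_lebesgue_integral_def)
    also have "\<dots> = 0" using zero[of 1] zero[of "min a 1"] False by simp
    finally show ?thesis .
  qed
  define fp where "fp x = ennreal (max 0 (H x))" for x
  define fn where "fn x = ennreal (max 0 (- H x))" for x
  have [measurable]: "fp \<in> borel_measurable lborel" "fn \<in> borel_measurable lborel"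
    unfolding fp_def fn_def by measurable
  have ip: "integrable lborel (\<lambda>x. max 0 (H x))" and ineg: "integrable lborel (\<lambda>x. max 0 (- H x))"
    using intH by auto
  have em: "emeasure (density lborel fp) {a<..} = emeasure (density lborel fn) {a<..}" for a :: real
  proof -
    have i1': "integrable lborel (\<lambda>x. indicator {a<..} x * max 0 (H x))"
      using integrable_mult_indicator[OF _ ip, of "{a<..}"] by simp
    have i2': "integrable lborel (\<lambda>x. indicator {a<..} x * max 0 (- H x))"
      using integrable_mult_indicator[OF _ ineg, of "{a<..}"] by simp
    have "emeasure (density lborel fp) {a<..} = (\<integral>\<^sup>+x. ennreal (indicator {a<..} x * max 0 (H x)) \<partial>lborel)"
      by (subst emeasure_density) (auto simp: fp_def intro!: nn_integral_cong split: split_indicator)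
    also have "\<dots> = ennreal (LINT x|lborel. indicator {a<..} x * max 0 (H x))"
      by (rule nn_integral_eq_integral[OF i1']) auto
    also have "(LINT x|lborel. indicator {a<..} x * max 0 (H x)) = (LINT x|lborel. indicator {a<..} x * max 0 (- H x))"
    proof -
      have "(LINT x|lborel. indicator {a<..} x * max 0 (H x)) - (LINT x|lborel. indicator {a<..} x * max 0 (- H x))
         = (LINT x|lborel. indicator {a<..} x * max 0 (H x) - indicator {a<..} x * max 0 (- H x))"
        by (rule Bochner_Integration.integral_diff[symmetric, OF i1' i2'])
      also have "\<dots> = (LINT x|lborel. indicator {a<..} x * H x)"
        by (intro Bochner_Integration.integral_cong) (auto simp: indicator_def)
      finally show ?thesis using intA[of a] by simp
    qed
    also have "ennreal (LINT x|lborel. indicator {a<..} x * max 0 (- H x)) = (\<integral>\<^sup>+x. ennreal (indicator {a<..} x * max 0 (- H x)) \<partial>lborel)"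
      by (rule nn_integral_eq_integral[OF i2', symmetric]) auto
    also have "\<dots> = emeasure (density lborel fn) {a<..}"
      by (subst emeasure_density) (auto simp: fn_def intro!: nn_integral_cong split: split_indicator)
    finally show ?thesis .
  qed
  have fin: "emeasure (density lborel fp) {a<..} < \<infinity>" for a :: real
  proof -
    have "emeasure (density lborel fp) {a<..} \<le> emeasure (density lborel fp) UNIV"
      by (rule emeasure_mono) auto
    also have "\<dots> = (\<integral>\<^sup>+x. ennreal (max 0 (H x)) \<partial>lborel)"
      by (subst emeasure_density) (auto simp: fp_def)
    also have "\<dots> = ennreal (LINT x|lborel. max 0 (H x))"
      by (rule nn_integral_eq_integral[OF ip]) auto
    also have "\<dots> < \<infinity>" by simp
    finally show ?thesis .
  qed
  have "density lborel fp = density lborel fn"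
  proof -
    have finn: "emeasure (density lborel fn) {a<..} < \<infinity>" for a :: real
      using fin[of a] em[of a] by simp
    show ?thesis by (rule measure_eqI_lessThan) (use fin finn em in auto)
  qed
  hence "AE x in lborel. fp x = fn x"
    using sigma_finite_measure.density_unique[OF sigma_finite_lborel, of fp fn] by simp
  thus ?thesis
    by eventually_elim (auto simp: fp_def fn_def H_def max_def split: if_splits)
qed

definition per :: "real \<Rightarrow> real \<Rightarrow> (real \<Rightarrow> real) \<Rightarrow> real \<Rightarrow> real" where
  "per w H P x = H * of_int \<lfloor>x / w\<rfloor> + P (x - w * of_int \<lfloor>x / w\<rfloor>)"

definition perd :: "real \<Rightarrow> (real \<Rightarrow> real) \<Rightarrow> real \<Rightarrow> real" where
  "perd w p x = p (x - w * of_int \<lfloor>x / w\<rfloor>)"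

lemma frac_range:
  assumes "w > 0" shows "0 \<le> x - w * of_int \<lfloor>x / w\<rfloor>" "x - w * of_int \<lfloor>x / w\<rfloor> < w"
proof -
  have h1: "of_int \<lfloor>x/w\<rfloor> \<le> x/w" and h2: "x/w < of_int \<lfloor>x/w\<rfloor> + 1" by linarith+
  have "of_int \<lfloor>x/w\<rfloor> * w \<le> x" using h1 assms by (metis pos_le_divide_eq)
  then show "0 \<le> x - w * of_int \<lfloor>x / w\<rfloor>" by (simp add: mult.commute)
  have "x < (of_int \<lfloor>x/w\<rfloor> + 1) * w" using h2 assms by (metis pos_divide_less_eq)
  then show "x - w * of_int \<lfloor>x / w\<rfloor> < w" by (simp add: algebra_simps)
qed

lemma perd_measurable:
  assumes "continuous_on UNIV p"
  shows "perd w p \<in> borel_measurable borel"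
proof -
  have [measurable]: "p \<in> borel_measurable borel" using assms by (rule borel_measurable_continuous_onI)
  show ?thesis unfolding perd_def by measurable
qed

lemma perd_set_integrable:
  assumes "continuous_on UNIV p" "w > 0" "\<And>z. 0 \<le> z \<Longrightarrow> z < w \<Longrightarrow> \<bar>p z\<bar> \<le> M"
  shows "set_integrable lborel {a..b} (perd w p)"
  unfolding set_integrable_def
proof (rule integrableI_bounded_set_indicator[where B = M])
  show "perd w p \<in> borel_measurable lborel" using perd_measurable[OF assms(1)] by simp
  show "AE x in lborel. x \<in> {a..b} \<longrightarrow> norm (perd w p x) \<le> M"
    using assms(3) frac_range[OF assms(2)] by (auto simp: perd_def)
  show "emeasure lborel {a..b} < \<infinity>" by (simp add: emeasure_lborel_Icc_eq)
qed auto

lemma perd_sq: "(perd w p x)\<^sup>2 = perd w (\<lambda>z. (p z)\<^sup>2) x"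
  by (simp add: perd_def)

locale prof =
  fixes w H :: real and P p :: "real \<Rightarrow> real"
  assumes w: "w > 0" and P0: "P 0 = 0" and Pw: "P w = H"
    and Pd: "\<And>z. (P has_real_derivative p z) (at z)"
begin

lemma Pcont: "continuous_on S P"
  using Pd by (meson DERIV_isCont continuous_at_imp_continuous_on)

lemma per_on_interval:
  fixes m :: int
  assumes "x \<in> {m*w..(m+1)*w}"
  shows "per w H P x = H * m + P (x - m * w)"
proof (cases "x = (m+1)*w")
  case True
  then have "x / w = m + 1" using w by simp
  then have "\<lfloor>x/w\<rfloor> = m + 1" by (metis floor_of_int of_int_1 of_int_add)
  then show ?thesis using True P0 Pw by (simp add: per_def algebra_simps)
next
  case False
  then have "m \<le> x / w" "x / w < m + 1" using assms w
    by (auto simp: field_simps)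
  then have "\<lfloor>x/w\<rfloor> = m" by (simp add: floor_eq_iff)
  then show ?thesis by (simp add: per_def algebra_simps)
qed

lemma per_cont: "continuous_on {a..b} (per w H P)"
proof -
  let ?I = "{\<lfloor>a/w\<rfloor>..\<lfloor>b/w\<rfloor>}"
  have "continuous_on (\<Union>m\<in>?I. {real_of_int m*w..(m+1)*w}) (per w H P)"
  proof (rule continuous_on_closed_Union)
    fix m assume "m \<in> ?I"
    have "continuous_on {real_of_int m*w..(m+1)*w} (\<lambda>x. H * m + P (x - m * w))"
      by (intro continuous_intros continuous_on_compose2[OF Pcont[of UNIV]]) auto
    then show "continuous_on {real_of_int m*w..(m+1)*w} (per w H P)"
      by (rule continuous_on_cong[THEN iffD1, rotated 2]) (auto simp: per_on_interval)
  qed auto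
  moreover have "{a..b} \<subseteq> (\<Union>m\<in>?I. {real_of_int m*w..(m+1)*w})"
  proof
    fix x assume x: "x \<in> {a..b}"
    let ?m = "\<lfloor>x/w\<rfloor>"
    have "?m \<in> ?I" using x w by (auto intro!: floor_mono divide_right_mono)
    moreover have "x \<in> {real_of_int ?m*w..(?m+1)*w}"
    proof -
      have h1: "?m \<le> x/w" and h2: "x/w < real_of_int ?m + 1" by linarith+
      have "?m * w \<le> x" using h1 w by (metis pos_le_divide_eq)
      moreover have "x < (real_of_int ?m+1)*w" using h2 w by (metis pos_divide_less_eq)
      ultimately
      show ?thesis by simp
    qed
    ultimately show "x \<in> (\<Union>m\<in>?I. {real_of_int m*w..(m+1)*w})" by blast
  qed
  ultimately show ?thesis by (rule continuous_on_subset)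
qed

lemma per_deriv:
  assumes "x / w \<notin> \<int>"
  shows "(per w H P has_real_derivative perd w p x) (at x)"
proof -
  let ?m = "\<lfloor>x/w\<rfloor>"
  have lt: "?m < x/w" using assms
    by (metis Ints_of_int floor_less_iff floor_of_int less_le not_le of_int_floor_le)
  have lt2: "x/w < ?m + 1" by linarith
  let ?S = "{real_of_int ?m * w <..< (?m+1)*w}"
  have xS: "x \<in> ?S" using lt lt2 w by (auto simp: field_simps)
  have "((\<lambda>y. H * ?m + P (y - ?m * w)) has_real_derivative p (x - ?m * w)) (at x)"
    by (rule derivative_eq_intros DERIV_chain2[OF Pd] | simp)+
  moreover have "perd w p x = p (x - ?m * w)" by (simp add: perd_def algebra_simps)
  ultimately have d: "((\<lambda>y. H * ?m + P (y - ?m * w)) has_real_derivative perd w p x) (at x)" by simp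
  show ?thesis
  proof (rule has_field_derivative_transform_within_open[OF d, where S = ?S])
    show "open ?S" by simp
    show "x \<in> ?S" by (rule xS)
    fix y assume "y \<in> ?S"
    then show "H * ?m + P (y - ?m * w) = per w H P y"
      by (subst per_on_interval[of _ ?m]) auto
  qed
qed

lemma per_ftc:
  assumes "a \<le> b"
  shows "(perd w p has_integral per w H P b - per w H P a) {a..b}"
proof (rule fundamental_theorem_of_calculus_interior_strong)
  let ?S = "(\<lambda>m. real_of_int m * w) ` {\<lfloor>a/w\<rfloor>..\<lceil>b/w\<rceil>}"
  show "finite ?S" by simp
  show "a \<le> b" by fact
  show "continuous_on {a..b} (per w H P)" by (rule per_cont)
  fix x assume x: "x \<in> {a<..<b} - ?S"
  have "x / w \<notin> \<int>"
  proof
    assume "x / w \<in> \<int>"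
    then obtain m where m: "x / w = of_int m" by (auto elim: Ints_cases)
    hence xm: "x = m * w" using w by (simp add: field_simps)
    have "a/w \<le> x/w" "x/w \<le> b/w" using x w by (auto intro!: divide_right_mono)
    hence "a/w \<le> m" "m \<le> b/w" using m by auto
    hence "m \<in> {\<lfloor>a/w\<rfloor>..\<lceil>b/w\<rceil>}" by (auto simp: floor_le_iff le_ceiling_iff)
    with xm x show False by auto
  qed
  then show "(per w H P has_vector_derivative perd w p x) (at x)"
    using per_deriv has_real_derivative_iff_has_vector_derivative by blast
qed

lemma per_LBINT:
  assumes "continuous_on UNIV p" "\<And>z. 0 \<le> z \<Longrightarrow> z < w \<Longrightarrow> \<bar>p z\<bar> \<le> M" "a \<le> b"
  shows "(LBINT t:{a..b}. perd w p t) = per w H P b - per w H P a"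
proof -
  have si: "set_integrable lborel {a..b} (perd w p)"
    by (rule perd_set_integrable[OF assms(1) w assms(2)])
  have "(LBINT t:{a..b}. perd w p t) = integral {a..b} (perd w p)"
    by (rule set_borel_integral_eq_integral(2)[OF si])
  also have "\<dots> = per w H P b - per w H P a"
    by (rule integral_unique[OF per_ftc[OF assms(3)]])
  finally show ?thesis .
qed

end

definition Pf :: "real \<Rightarrow> real \<Rightarrow> real \<Rightarrow> real \<Rightarrow> real" where
  "Pf \<beta> C lam z = pi/2 + lam * arctan (sinh ((z - C*\<beta>)/\<beta>))"
definition pf :: "real \<Rightarrow> real \<Rightarrow> real \<Rightarrow> real \<Rightarrow> real" where
  "pf \<beta> C lam z = lam / (\<beta> * cosh ((z - C*\<beta>)/\<beta>))"
definition Qf :: "real \<Rightarrow> real \<Rightarrow> real \<Rightarrow> real" where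
  "Qf \<beta> C z = (tanh ((z - C*\<beta>)/\<beta>) + tanh C) / \<beta>"
definition qf :: "real \<Rightarrow> real \<Rightarrow> real \<Rightarrow> real" where
  "qf \<beta> C z = 1 / (\<beta>\<^sup>2 * (cosh ((z - C*\<beta>)/\<beta>))\<^sup>2)"

lemma alg1: "c > 0 \<Longrightarrow> c\<^sup>2 = 1 + s\<^sup>2 \<Longrightarrow> (\<beta>::real) > 0 \<Longrightarrow>
   lam * (inverse (1 + s\<^sup>2) * (c / \<beta>)) = lam / (\<beta> * c)"
proof -
  assume a: "c > 0" "c\<^sup>2 = 1 + s\<^sup>2" "\<beta> > 0"
  have "lam * (inverse (1 + s\<^sup>2) * (c / \<beta>)) = lam * (inverse (c\<^sup>2) * (c / \<beta>))"
    using a(2) by simp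
  also have "\<dots> = lam / (\<beta> * c)" using a(1,3) by (simp add: power2_eq_square field_simps)
  finally show ?thesis .
qed

lemma Pf_deriv:
  assumes "\<beta> > 0"
  shows "(Pf \<beta> C lam has_real_derivative pf \<beta> C lam z) (at z)"
proof -
  let ?y = "(z - C*\<beta>)/\<beta>"
  have d0: "((\<lambda>z. (z - C*\<beta>)/\<beta>) has_real_derivative 1/\<beta>) (at z)"
    using assms by (auto intro!: derivative_eq_intros)
  have d1: "((\<lambda>z. sinh ((z - C*\<beta>)/\<beta>)) has_real_derivative cosh ?y * (1/\<beta>)) (at z)"
    by (rule has_field_derivative_sinh[OF d0])
  have d2: "((\<lambda>z. arctan (sinh ((z - C*\<beta>)/\<beta>))) has_real_derivative
      inverse (1 + (sinh ?y)\<^sup>2) * (cosh ?y * (1/\<beta>))) (at z)"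
    by (rule DERIV_chain2[OF DERIV_arctan d1])
  have d3: "(Pf \<beta> C lam has_real_derivative lam * (inverse (1 + (sinh ?y)\<^sup>2) * (cosh ?y * (1/\<beta>)))) (at z)"
    unfolding Pf_def using DERIV_add[OF DERIV_const DERIV_cmult[OF d2, of lam], of "pi/2"] by simp
  have "lam * (inverse (1 + (sinh ?y)\<^sup>2) * (cosh ?y * (1/\<beta>))) = pf \<beta> C lam z"
    unfolding pf_def using alg1[of "cosh ?y" "sinh ?y" \<beta> lam] assms by (simp add: cosh_square_eq)
  with d3 show ?thesis by simp
qed

lemma Qf_deriv:
  assumes "\<beta> > 0"
  shows "(Qf \<beta> C has_real_derivative qf \<beta> C z) (at z)"
proof -
  let ?y = "(z - C*\<beta>)/\<beta>"
  have d0: "((\<lambda>z. (z - C*\<beta>)/\<beta>) has_real_derivative 1/\<beta>) (at z)"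
    using assms by (auto intro!: derivative_eq_intros)
  have d1: "((\<lambda>z. tanh ((z - C*\<beta>)/\<beta>)) has_real_derivative (1 - (tanh ?y)^2) * (1/\<beta>)) (at z)"
    by (rule has_field_derivative_tanh) (simp_all add: d0)
  have d3: "(Qf \<beta> C has_real_derivative ((1 - (tanh ?y)^2) * (1/\<beta>) + 0) / \<beta>) (at z)"
    unfolding Qf_def by (intro DERIV_cdivide DERIV_add d1 DERIV_const)
  have c: "cosh ?y > 0" by simp
  have e: "1 - (tanh ?y)\<^sup>2 = 1 / (cosh ?y)\<^sup>2"
  proof -
    have nz: "1 + (sinh ?y)\<^sup>2 > 0" by (simp add: add_pos_nonneg)
    have "1 - (tanh ?y)\<^sup>2 = ((cosh ?y)\<^sup>2 - (sinh ?y)\<^sup>2) / (cosh ?y)\<^sup>2"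
      using c unfolding tanh_def by (simp add: power_divide field_simps)
    also have "(cosh ?y)\<^sup>2 - (sinh ?y)\<^sup>2 = 1" by (simp add: cosh_square_eq)
    finally show ?thesis .
  qed
  have "((1 - (tanh ?y)^2) * (1/\<beta>) + 0) / \<beta> = qf \<beta> C z"
    unfolding qf_def e by (simp add: power2_eq_square)
  with d3 show ?thesis by simp
qed

locale par =
  fixes \<beta> C :: real
  assumes bpos: "\<beta> > 0" and Cpos: "C > 0"
begin

definition "lam = (pi/2) / arctan (sinh C)"
definition "w = 2*C*\<beta>"

lemma A0pos: "arctan (sinh C) > 0"
  using Cpos arctan_less_iff[of 0 "sinh C"] by simp

lemma A0lt: "arctan (sinh C) < pi/2" by (rule arctan_ubound)

lemma lamA: "lam * arctan (sinh C) = pi/2"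
  using A0pos by (simp add: lam_def)

lemma lam_ge1: "lam \<ge> 1"
  using A0pos A0lt by (simp add: lam_def field_simps)

lemma wpos: "w > 0" using bpos Cpos by (simp add: w_def)

lemma P0: "Pf \<beta> C lam 0 = 0"
proof -
  have "(0 - C*\<beta>)/\<beta> = - C" using bpos by simp
  then show ?thesis using lamA by (simp add: Pf_def arctan_minus)
qed

lemma Pw: "Pf \<beta> C lam w = pi"
proof -
  have "(w - C*\<beta>)/\<beta> = C" using bpos by (simp add: w_def)
  then show ?thesis using lamA by (simp add: Pf_def)
qed

lemma Q0: "Qf \<beta> C 0 = 0"
proof -
  have "(0 - C*\<beta>)/\<beta> = - C" using bpos by simp
  then show ?thesis by (simp add: Qf_def)
qed

lemma Qw: "Qf \<beta> C w = 2 * tanh C / \<beta>"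
proof -
  have "(w - C*\<beta>)/\<beta> = C" using bpos by (simp add: w_def)
  then show ?thesis by (simp add: Qf_def)
qed

lemma yrange:
  assumes "0 \<le> z" "z \<le> w"
  shows "\<bar>(z - C*\<beta>)/\<beta>\<bar> \<le> C"
proof -
  have "-C*\<beta> \<le> z - C*\<beta>" "z - C*\<beta> \<le> C*\<beta>" using assms by (auto simp: w_def)
  then show ?thesis using bpos by (auto simp: abs_le_iff field_simps)
qed

lemma arctan_abs: "\<bar>arctan x\<bar> = arctan \<bar>x\<bar>"
  by (cases "x \<ge> 0") (auto simp: arctan_minus abs_if arctan_less_iff[of _ 0, simplified] arctan_le_iff[of 0, simplified] dest: leD)

lemma sinh_abs: "\<bar>sinh x\<bar> = sinh \<bar>x :: real\<bar>"
  by (cases "x \<ge> 0") auto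

lemma Pf_nonneg:
  assumes "0 \<le> z" "z \<le> w"
  shows "0 \<le> Pf \<beta> C lam z"
proof -
  let ?y = "(z - C*\<beta>)/\<beta>"
  have "\<bar>sinh ?y\<bar> \<le> sinh C" using yrange[OF assms] by (simp add: sinh_abs)
  then have "\<bar>arctan (sinh ?y)\<bar> \<le> arctan (sinh C)" by (simp add: arctan_abs arctan_le_iff)
  then have "lam * \<bar>arctan (sinh ?y)\<bar> \<le> pi/2" using lamA lam_ge1
    by (metis mult_left_mono order_trans le_numeral_extra(1) zero_le_one dual_order.trans) 
  moreover have "lam * (- \<bar>arctan (sinh ?y)\<bar>) \<le> lam * arctan (sinh ?y)"
    using lam_ge1 by (intro mult_left_mono) auto
  ultimately have "- (pi/2) \<le> lam * arctan (sinh ?y)" by simp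
  then show ?thesis by (simp add: Pf_def)
qed

lemma sin_Pf:
  assumes "0 \<le> z" "z \<le> w"
  shows "(sin (Pf \<beta> C lam z))\<^sup>2 \<le> 1 / (cosh ((z - C*\<beta>)/\<beta>))\<^sup>2"
proof -
  let ?y = "(z - C*\<beta>)/\<beta>"
  define a where "a = arctan (sinh ?y)"
  define t where "t = lam * a"
  have "\<bar>sinh ?y\<bar> \<le> sinh C" using yrange[OF assms] by (simp add: sinh_abs)
  then have aA: "\<bar>a\<bar> \<le> arctan (sinh C)" by (simp add: a_def arctan_abs arctan_le_iff)
  have tA: "\<bar>t\<bar> = lam * \<bar>a\<bar>" using lam_ge1 by (simp add: t_def abs_mult)
  have "lam * \<bar>a\<bar> \<le> lam * arctan (sinh C)"
    using lam_ge1 by (intro mult_left_mono[OF aA]) simp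
  then have tpi: "\<bar>t\<bar> \<le> pi/2" using tA lamA by linarith
  have at: "\<bar>a\<bar> \<le> \<bar>t\<bar>" using tA lam_ge1 mult_right_mono[OF lam_ge1, of "\<bar>a\<bar>"] by simp
  have "sin (Pf \<beta> C lam z) = cos t" by (simp add: Pf_def t_def a_def sin_add)
  also have "\<dots> = cos \<bar>t\<bar>" by simp
  finally have st: "sin (Pf \<beta> C lam z) = cos \<bar>t\<bar>" .
  have c0: "0 \<le> cos \<bar>t\<bar>" using tpi by (intro cos_ge_zero) auto
  have c1: "cos \<bar>t\<bar> \<le> cos \<bar>a\<bar>"
    using at tpi by (subst cos_mono_le_eq) auto
  have "(sin (Pf \<beta> C lam z))\<^sup>2 \<le> (cos \<bar>a\<bar>)\<^sup>2"
    unfolding st using c0 c1 by (simp add: power_mono)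
  also have "\<dots> = 1 / (1 + (sinh ?y)\<^sup>2)"
    by (simp add: a_def cos_arctan power_divide)
  also have "\<dots> = 1 / (cosh ?y)\<^sup>2" by (simp add: cosh_square_eq)
  finally show ?thesis .
qed

lemma integrand_bound:
  assumes "0 \<le> z" "z \<le> w"
  shows "(pf \<beta> C lam z)\<^sup>2 + 1/\<beta>\<^sup>2 * (sin (Pf \<beta> C lam z))\<^sup>2 \<le> (lam\<^sup>2 + 1) * qf \<beta> C z"
proof -
  let ?c = "cosh ((z - C*\<beta>)/\<beta>)"
  have e1: "(pf \<beta> C lam z)\<^sup>2 = lam\<^sup>2 * qf \<beta> C z"
    by (simp add: pf_def qf_def power_divide power_mult_distrib)
  have "1/\<beta>\<^sup>2 * (sin (Pf \<beta> C lam z))\<^sup>2 \<le> 1/\<beta>\<^sup>2 * (1 / ?c\<^sup>2)"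
    using sin_Pf[OF assms] by (intro mult_left_mono) auto
  also have "\<dots> = qf \<beta> C z" by (simp add: qf_def)
  finally show ?thesis using e1 by (simp add: algebra_simps)
qed

lemma pf_bd: "\<bar>pf \<beta> C lam z\<bar> \<le> lam / \<beta>"
proof -
  have c: "cosh ((z - C*\<beta>)/\<beta>) \<ge> 1" by (rule cosh_real_ge_1)
  have "\<bar>pf \<beta> C lam z\<bar> = lam / (\<beta> * cosh ((z - C*\<beta>)/\<beta>))"
    using lam_ge1 bpos by (simp add: pf_def abs_mult)
  also have "\<dots> \<le> lam / (\<beta> * 1)"
    using lam_ge1 bpos c by (intro divide_left_mono mult_left_mono) auto
  finally show ?thesis by simp
qed

lemma qf_bd: "\<bar>qf \<beta> C z\<bar> \<le> 1 / \<beta>\<^sup>2"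
proof -
  have c: "(cosh ((z - C*\<beta>)/\<beta>))\<^sup>2 \<ge> 1" using cosh_real_ge_1 by (simp add: one_le_power)
  have "\<bar>qf \<beta> C z\<bar> = 1 / (\<beta>\<^sup>2 * (cosh ((z - C*\<beta>)/\<beta>))\<^sup>2)" by (simp add: qf_def)
  also have "\<dots> \<le> 1 / (\<beta>\<^sup>2 * 1)"
    using bpos c by (intro divide_left_mono mult_left_mono) auto
  finally show ?thesis by simp
qed

lemma Qf_le: "Qf \<beta> C z \<le> 2 / \<beta>"
proof -
  have "tanh ((z - C*\<beta>)/\<beta>) + tanh C \<le> 2" using tanh_real_lt_1[of C] tanh_real_lt_1[of "(z - C*\<beta>)/\<beta>"] by simp
  then show ?thesis using bpos by (simp add: Qf_def divide_right_mono)
qed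

lemma pf_cont: "continuous_on UNIV (pf \<beta> C lam)"
  unfolding pf_def using bpos by (intro continuous_intros) (auto simp: add_pos_nonneg)

lemma qf_cont: "continuous_on UNIV (qf \<beta> C)"
  unfolding qf_def using bpos by (intro continuous_intros) auto

end

lemma sin_shift_sq: "(sin (pi * of_int m + t))\<^sup>2 = (sin t)\<^sup>2"
proof -
  have s: "sin (pi * of_int m) = 0" by (subst sin_zero_iff_int2) (auto simp: mult.commute)
  have c: "(cos (pi * of_int m))\<^sup>2 = 1" using s sin_cos_squared_add[of "pi * of_int m"] by simp
  show ?thesis by (simp add: sin_add s power_mult_distrib c)
qed

lemma wderiv_weak: "\<phi> \<in> H1 \<Longrightarrow> is_weak_deriv \<phi> (wderiv \<phi>)"
proof -
  assume "\<phi> \<in> H1"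
  then obtain g where "is_weak_deriv \<phi> g" unfolding H1_def by blast
  then show ?thesis unfolding wderiv_def by (rule someI[of "is_weak_deriv \<phi>" g])
qed

lemma F_lower:
  assumes "\<phi> \<in> J"
  shows "F \<beta> \<kappa> \<phi> \<ge> - \<kappa>/2 * \<phi> 1"
proof -
  have w: "is_weak_deriv \<phi> (wderiv \<phi>)" using assms unfolding J_def by (simp add: wderiv_weak)
  have "\<forall>x\<in>{0..1}. \<phi> x = \<phi> 0 + (LBINT t:{0..x}. wderiv \<phi> t)" using w unfolding is_weak_deriv_def by blast
  moreover have "(1::real) \<in> {0..1}" by simp
  ultimately have "\<phi> 1 = \<phi> 0 + (LBINT t:{0..1}. wderiv \<phi> t)" by blast
  then have d: "(LBINT x:{0..1}. wderiv \<phi> x) = \<phi> 1" using assms unfolding J_def by simp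
  have "0 \<le> (LBINT x:{0..1::real}. (wderiv \<phi> x)\<^sup>2 + (1/\<beta>\<^sup>2) * (sin (\<phi> x))\<^sup>2)"
    unfolding set_lebesgue_integral_def
    by (intro Bochner_Integration.integral_nonneg scaleR_nonneg_nonneg add_nonneg_nonneg mult_nonneg_nonneg) auto
  then show ?thesis unfolding F_def d by simp
qed

context par begin

definition "psi = per w pi (Pf \<beta> C lam)"
definition "gg = perd w (pf \<beta> C lam)"

lemma prof1: "prof w pi (Pf \<beta> C lam) (pf \<beta> C lam)"
proof
  show "w > 0" by (rule wpos)
  show "Pf \<beta> C lam 0 = 0" by (rule P0)
  show "Pf \<beta> C lam w = pi" by (rule Pw)
  fix z show "(Pf \<beta> C lam has_real_derivative pf \<beta> C lam z) (at z)" by (rule Pf_deriv[OF bpos])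
qed

definition "HH = (lam\<^sup>2 + 1) * (2 * tanh C / \<beta>)"

lemma prof2: "prof w HH (\<lambda>z. (lam\<^sup>2 + 1) * Qf \<beta> C z) (\<lambda>z. (lam\<^sup>2 + 1) * qf \<beta> C z)"
proof
  show "w > 0" by (rule wpos)
  show "(lam\<^sup>2 + 1) * Qf \<beta> C 0 = 0" by (simp add: Q0)
  show "(lam\<^sup>2 + 1) * Qf \<beta> C w = HH" by (simp add: Qw HH_def)
  fix z show "((\<lambda>z. (lam\<^sup>2 + 1) * Qf \<beta> C z) has_real_derivative (lam\<^sup>2 + 1) * qf \<beta> C z) (at z)"
    by (rule DERIV_cmult[OF Qf_deriv[OF bpos]])
qed

lemma psi0: "psi 0 = 0"
  by (simp add: psi_def per_def P0)

lemma gg_int: "set_integrable lborel {a..b} gg"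
  unfolding gg_def by (rule perd_set_integrable[OF pf_cont wpos pf_bd])

lemma gg2_int: "set_integrable lborel {a..b} (\<lambda>x. (gg x)\<^sup>2)"
proof -
  have "(\<lambda>x. (gg x)\<^sup>2) = perd w (\<lambda>z. (pf \<beta> C lam z)\<^sup>2)" by (simp add: gg_def perd_sq)
  moreover have "set_integrable lborel {a..b} (perd w (\<lambda>z. (pf \<beta> C lam z)\<^sup>2))"
  proof (rule perd_set_integrable[OF _ wpos])
    show "continuous_on UNIV (\<lambda>z. (pf \<beta> C lam z)\<^sup>2)" by (intro continuous_intros pf_cont)
    fix z
    have "\<bar>(pf \<beta> C lam z)\<^sup>2\<bar> = \<bar>pf \<beta> C lam z\<bar>\<^sup>2" by simp
    also have "\<dots> \<le> (lam/\<beta>)\<^sup>2" by (rule power_mono[OF pf_bd]) simp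
    finally show "\<bar>(pf \<beta> C lam z)\<^sup>2\<bar> \<le> (lam/\<beta>)\<^sup>2" .
  qed
  ultimately show ?thesis by simp
qed

lemma psi_weak: "is_weak_deriv psi gg"
  unfolding is_weak_deriv_def
proof (intro conjI ballI gg_int gg2_int)
  fix x :: real assume "x \<in> {0..1}"
  then have "(LBINT t:{0..x}. gg t) = psi x - psi 0"
    unfolding gg_def psi_def by (intro prof.per_LBINT[OF prof1 pf_cont pf_bd]) auto
  then show "psi x = psi 0 + (LBINT t:{0..x}. gg t)" by simp
qed

lemma psiJ: "psi \<in> J"
  unfolding J_def H1_def using psi_weak psi0 by blast

lemma psi_cont: "continuous_on {0..1} psi"
  unfolding psi_def by (rule prof.per_cont[OF prof1])

lemma sin_int: "set_integrable lborel {0..1} (\<lambda>x. (1/\<beta>\<^sup>2) * (sin (psi x))\<^sup>2)"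
proof -
  have "continuous_on {0..1} (\<lambda>x. (1/\<beta>\<^sup>2) * (sin (psi x))\<^sup>2)"
    by (intro continuous_on_mult continuous_on_const continuous_on_power continuous_on_sin psi_cont)
  then show ?thesis by (rule borel_integrable_atLeastAtMost')
qed

lemma energy_eq:
  "(LBINT x:{0..1}. (wderiv psi x)\<^sup>2 + (1/\<beta>\<^sup>2) * (sin (psi x))\<^sup>2)
   = (LBINT x:{0..1}. (gg x)\<^sup>2 + (1/\<beta>\<^sup>2) * (sin (psi x))\<^sup>2)"
proof -
  have w1: "is_weak_deriv psi (wderiv psi)" using psiJ unfolding J_def by (simp add: wderiv_weak)
  have ae: "AE x in lborel. x \<in> {0..1} \<longrightarrow> wderiv psi x = gg x"
    by (rule wd_unique[OF w1 psi_weak])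
  have i1: "set_integrable lborel {0..1} (\<lambda>x. (wderiv psi x)\<^sup>2 + (1/\<beta>\<^sup>2) * (sin (psi x))\<^sup>2)"
  proof -
    have "set_integrable lborel {0..1} (\<lambda>x. (wderiv psi x)\<^sup>2)" using w1 unfolding is_weak_deriv_def by blast
    then show ?thesis using sin_int by (rule set_integral_add)
  qed
  have i2: "set_integrable lborel {0..1} (\<lambda>x. (gg x)\<^sup>2 + (1/\<beta>\<^sup>2) * (sin (psi x))\<^sup>2)"
    using gg2_int sin_int by (rule set_integral_add)
  show ?thesis
    unfolding set_lebesgue_integral_def
  proof (rule integral_cong_AE)
    show "(\<lambda>x. indicat_real {0..1} x *\<^sub>R ((wderiv psi x)\<^sup>2 + 1 / \<beta>\<^sup>2 * (sin (psi x))\<^sup>2)) \<in> borel_measurable lborel"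
      using i1 unfolding set_integrable_def by (rule borel_measurable_integrable)
    show "(\<lambda>x. indicat_real {0..1} x *\<^sub>R ((gg x)\<^sup>2 + 1 / \<beta>\<^sup>2 * (sin (psi x))\<^sup>2)) \<in> borel_measurable lborel"
      using i2 unfolding set_integrable_def by (rule borel_measurable_integrable)
    show "AE x in lborel. indicat_real {0..1} x *\<^sub>R ((wderiv psi x)\<^sup>2 + 1 / \<beta>\<^sup>2 * (sin (psi x))\<^sup>2) =
        indicat_real {0..1} x *\<^sub>R ((gg x)\<^sup>2 + 1 / \<beta>\<^sup>2 * (sin (psi x))\<^sup>2)"
      using ae by eventually_elim (auto simp: indicator_def)
  qed
qed

definition "nn = real_of_int \<lfloor>1 / w\<rfloor>"

lemma nn_nonneg: "nn \<ge> 0" using wpos by (simp add: nn_def)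

lemma energy_bound:
  "(LBINT x:{0..1}. (gg x)\<^sup>2 + (1/\<beta>\<^sup>2) * (sin (psi x))\<^sup>2) \<le> (lam\<^sup>2 + 1) * (2/\<beta>) * (nn + 1)"
proof -
  let ?q = "\<lambda>z. (lam\<^sup>2 + 1) * qf \<beta> C z"
  let ?Q = "\<lambda>z. (lam\<^sup>2 + 1) * Qf \<beta> C z"
  have i2: "set_integrable lborel {0..1} (\<lambda>x. (gg x)\<^sup>2 + (1/\<beta>\<^sup>2) * (sin (psi x))\<^sup>2)"
    using gg2_int sin_int by (rule set_integral_add)
  have qc: "continuous_on UNIV ?q" by (intro continuous_intros qf_cont)
  have l0: "lam\<^sup>2 + 1 > 0" using zero_le_power2[of lam] by linarith
  have qb: "\<bar>?q z\<bar> \<le> (lam\<^sup>2 + 1) * (1/\<beta>\<^sup>2)" for z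
  proof -
    have "\<bar>?q z\<bar> = (lam\<^sup>2 + 1) * \<bar>qf \<beta> C z\<bar>" using l0 by (simp only: abs_mult abs_of_pos)
    also have "\<dots> \<le> (lam\<^sup>2 + 1) * (1/\<beta>\<^sup>2)" using l0 qf_bd[of z] by (intro mult_left_mono) auto
    finally show ?thesis .
  qed
  have i3: "set_integrable lborel {0..1} (perd w ?q)"
    by (rule perd_set_integrable[OF qc wpos qb])
  have "(LBINT x:{0..1}. (gg x)\<^sup>2 + (1/\<beta>\<^sup>2) * (sin (psi x))\<^sup>2) \<le> (LBINT x:{0..1}. perd w ?q x)"
  proof (rule set_integral_mono[OF i2 i3])
    fix x :: real
    let ?z = "x - w * of_int \<lfloor>x / w\<rfloor>"
    have z: "0 \<le> ?z" "?z \<le> w" using frac_range[OF wpos, of x] by auto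
    have "(sin (psi x))\<^sup>2 = (sin (Pf \<beta> C lam ?z))\<^sup>2"
      unfolding psi_def per_def by (rule sin_shift_sq)
    then show "(gg x)\<^sup>2 + (1/\<beta>\<^sup>2) * (sin (psi x))\<^sup>2 \<le> perd w ?q x"
      using integrand_bound[OF z] by (simp add: gg_def perd_def)
  qed
  also have "\<dots> = per w HH ?Q 1 - per w HH ?Q 0"
    by (rule prof.per_LBINT[OF prof2 qc qb]) simp
  also have "per w HH ?Q 0 = 0" by (simp add: per_def Q0)
  also have "per w HH ?Q 1 \<le> (lam\<^sup>2 + 1) * (2/\<beta>) * (nn + 1)"
  proof -
    have l: "lam\<^sup>2 + 1 > 0" using zero_le_power2[of lam] by linarith
    have "HH \<le> (lam\<^sup>2 + 1) * (2/\<beta>)"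
      unfolding HH_def using tanh_real_lt_1[of C] bpos l
      by (intro mult_left_mono) (auto simp: divide_right_mono)
    then have a: "HH * nn \<le> (lam\<^sup>2 + 1) * (2/\<beta>) * nn" using nn_nonneg by (rule mult_right_mono)
    have b: "?Q (1 - w * of_int \<lfloor>1 / w\<rfloor>) \<le> (lam\<^sup>2 + 1) * (2/\<beta>)"
      using Qf_le l by (intro mult_left_mono) auto
    have "per w HH ?Q 1 = HH * nn + ?Q (1 - w * of_int \<lfloor>1 / w\<rfloor>)"
      by (simp only: per_def nn_def)
    moreover have "(lam\<^sup>2 + 1) * (2/\<beta>) * (nn + 1) = (lam\<^sup>2 + 1) * (2/\<beta>) * nn + (lam\<^sup>2 + 1) * (2/\<beta>)"
      by (simp add: distrib_left)
    ultimately show ?thesis using a b by linarith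
  qed
  finally show ?thesis by simp
qed

lemma psi1: "psi 1 \<ge> pi * nn"
proof -
  have z: "0 \<le> 1 - w * of_int \<lfloor>1 / w\<rfloor>" "1 - w * of_int \<lfloor>1 / w\<rfloor> \<le> w"
    using frac_range[OF wpos, of 1] by auto
  show ?thesis using Pf_nonneg[OF z] by (simp add: psi_def per_def nn_def)
qed

lemma F_psi:
  assumes "\<kappa> \<ge> 0"
  shows "F \<beta> \<kappa> psi \<le> (lam\<^sup>2 + 1) * (nn + 1) / (4*\<beta>) - \<kappa>/2 * pi * nn"
proof -
  have w1: "is_weak_deriv psi (wderiv psi)" using psiJ unfolding J_def by (simp add: wderiv_weak)
  have "\<forall>x\<in>{0..1}. psi x = psi 0 + (LBINT t:{0..x}. wderiv psi t)" using w1 unfolding is_weak_deriv_def by blast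
  moreover have "(1::real) \<in> {0..1}" by simp
  ultimately have "psi 1 = psi 0 + (LBINT t:{0..1}. wderiv psi t)" by blast
  then have d: "(LBINT x:{0..1}. wderiv psi x) = psi 1" using psi0 by simp
  have e: "(LBINT x:{0..1}. (wderiv psi x)\<^sup>2 + (1/\<beta>\<^sup>2) * (sin (psi x))\<^sup>2) \<le> (lam\<^sup>2 + 1) * (2/\<beta>) * (nn + 1)"
    using energy_eq energy_bound by simp
  have k0: "\<kappa>/2 * (pi * nn) \<le> \<kappa>/2 * psi 1" using psi1 assms by (intro mult_left_mono) auto
  have k: "\<kappa>/2 * pi * nn \<le> \<kappa>/2 * psi 1" using k0 by (simp only: mult.assoc)
  have eqB: "1/8 * ((lam\<^sup>2 + 1) * (2/\<beta>) * (nn + 1)) = (lam\<^sup>2 + 1) * (nn + 1) / (4*\<beta>)"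
    using bpos by (simp add: field_simps)
  have "1/8 * (LBINT x:{0..1}. (wderiv psi x)\<^sup>2 + (1/\<beta>\<^sup>2) * (sin (psi x))\<^sup>2) \<le> (lam\<^sup>2 + 1) * (nn + 1) / (4*\<beta>)"
    using e eqB by linarith
  then show ?thesis using k unfolding F_def d by linarith
qed

end

theorem lemma1:
  fixes \<kappa>t :: real
  assumes "\<kappa>t > 1 / pi"
  shows "\<exists>\<beta>0>0. \<forall>\<beta>. 0 < \<beta> \<and> \<beta> < \<beta>0 \<longrightarrow>
           (\<forall>\<phi>. is_minimizer \<beta> (\<kappa>t / \<beta>) \<phi> \<longrightarrow> \<phi> 1 \<ge> pi)"
proof -
  define K where "K = \<kappa>t * pi"
  have K1: "K > 1" using assms pi_gt_zero unfolding K_def by (simp add: divide_less_eq)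
  have kpos: "\<kappa>t > 0" using K1 pi_gt_zero unfolding K_def by (metis less_trans zero_less_one zero_less_mult_pos2)
  have sK: "sqrt K > 1" using K1 by simp
  define \<theta> where "\<theta> = (pi/2) / sqrt K"
  have th0: "\<theta> > 0" using sK by (simp add: \<theta>_def)
  have th1: "\<theta> < pi/2" using sK by (simp add: \<theta>_def divide_less_eq)
  define C where "C = arsinh (tan \<theta>)"
  have sC: "sinh C = tan \<theta>" by (simp add: C_def)
  have Cpos: "C > 0" using tan_gt_zero[OF th0 th1] sC by (metis sinh_real_pos_iff)
  have aC: "arctan (sinh C) = \<theta>" using sC th0 th1 by (simp add: arctan_tan)
  define Nn where "Nn = (3*K+1)/(K-1) + 1"
  have Nnpos: "Nn > 0" using K1 unfolding Nn_def by (simp add: add_pos_pos)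
  define \<beta>0 where "\<beta>0 = 1 / (2*C*Nn)"
  have b0pos: "\<beta>0 > 0" using Cpos Nnpos by (simp add: \<beta>0_def)
  show ?thesis
  proof (intro exI[of _ \<beta>0] conjI allI impI b0pos)
    fix \<beta> \<phi> assume b: "0 < \<beta> \<and> \<beta> < \<beta>0" and mini: "is_minimizer \<beta> (\<kappa>t / \<beta>) \<phi>"
    interpret par \<beta> C using b Cpos by unfold_locales auto
    have lamK: "lam = sqrt K" unfolding lam_def aC \<theta>_def using sK by simp
    have lam2: "lam\<^sup>2 = K" using lamK K1 by simp
    have phiJ: "\<phi> \<in> J" and le: "F \<beta> (\<kappa>t / \<beta>) \<phi> \<le> F \<beta> (\<kappa>t / \<beta>) psi"
      using mini psiJ by (auto simp: is_minimizer_def)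
    have kap: "\<kappa>t / \<beta> > 0" using kpos b by simp
    have Fp: "F \<beta> (\<kappa>t / \<beta>) psi \<le> (K + 1) * (nn + 1) / (4*\<beta>) - \<kappa>t / \<beta> / 2 * pi * nn"
      using F_psi[of "\<kappa>t / \<beta>"] kap lam2 by simp
    have Fl: "F \<beta> (\<kappa>t / \<beta>) \<phi> \<ge> - (\<kappa>t / \<beta>)/2 * \<phi> 1" by (rule F_lower[OF phiJ])
    have nnb: "(K - 1) * nn > 3*K + 1"
    proof -
      have "2*C*\<beta>*Nn < 2*C*\<beta>0*Nn" using b Cpos Nnpos by simp
      also have "\<dots> = 1" using Cpos Nnpos by (simp add: \<beta>0_def)
      finally have "Nn < 1 / w" using Cpos b Nnpos by (simp add: w_def field_simps)
      moreover have "1/w - 1 < nn" unfolding nn_def by linarith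
      ultimately have "(3*K+1)/(K-1) < nn" unfolding Nn_def by linarith
      then show ?thesis using K1 by (simp add: pos_divide_less_eq mult.commute)
    qed
    show "pi \<le> \<phi> 1"
    proof (rule ccontr)
      assume "\<not> pi \<le> \<phi> 1"
      then have "\<phi> 1 < pi" by simp
      moreover have "(\<kappa>t / \<beta>)/2 > 0" using kap by simp
      ultimately have "(\<kappa>t / \<beta>)/2 * \<phi> 1 < (\<kappa>t / \<beta>)/2 * pi" by (rule mult_strict_left_mono)
      with Fl have A: "F \<beta> (\<kappa>t / \<beta>) \<phi> > - (\<kappa>t / \<beta>)/2 * pi" by linarith
      have e1: "(K + 1) * (nn + 1) / (4*\<beta>) - \<kappa>t / \<beta> / 2 * pi * nn = ((K + 1) * (nn + 1) - 2*K*nn) / (4*\<beta>)"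
        using b by (simp add: K_def field_simps)
      have e2: "- (\<kappa>t / \<beta>)/2 * pi = (- 2*K) / (4*\<beta>)"
        using b by (simp add: K_def field_simps)
      have "(K + 1) * (nn + 1) - 2*K*nn + 2*K = 3*K + 1 - (K - 1) * nn" by (simp add: algebra_simps)
      then have "(K + 1) * (nn + 1) - 2*K*nn \<le> - 2*K" using nnb by linarith
      then have "((K + 1) * (nn + 1) - 2*K*nn) / (4*\<beta>) \<le> (- 2*K) / (4*\<beta>)"
        using b by (intro divide_right_mono) auto
      then show False using A le Fp e1 e2 by linarith
    qed
  qed
qed

end
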